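(* For every $\alpha\in[0,2]$, \[ \max_{\mathbf z\in\mathcal Z} G_\alpha(\mathbf z)\;=\;\max_{\mathbf x\in\mathcal X}G_\alpha(\mathbf x), \] i.e. the integrality gap $f^{\mathrm{SU}}(\mathbf z^* )/f^{\mathrm{RSU}}(\mathbf x^* )$ between the SSA problem with uniform allocation and its relaxation equals $1$, where $G_\alpha$ is defined below.
   Context: $\mathcal U$ (users) and $\mathcal B$ (stations) are finite nonempty sets with positive rates $r_{ub}$. $\mathcal Z=\{\mathbf z\in\mathbb Z_+^{|\mathcal U|\times|\mathcal B|}:\sum_b z_{ub}=1\ \forall u\}$ and $\mathcal X=\{\mathbf x\in\mathbb R_+^{|\mathcal U|\times|\mathcal B|}:\sum_b x_{ub}=1\ \forall u\}$. For $\mathbf w\in\mathcal X$ define $G_0(\mathbf w)=\sum_{u,b} r_{ub}w_{ub}\big(1+\sum_{v\ne u}w_{vb}\big)^{-1}$; $G_1(\mathbf w)=\sum_{u,b} w_{ub}\big(\log r_{ub}-\log(1+\sum_{v\ne u} w_{vb})\big)$; for $\alpha>0,\alpha\ne1$: $G_\alpha(\mathbf w)=\frac{1}{1-\alpha}\sum_{u,b} r_{ub}^{1-\alpha}w_{ub}\big(1+\sum_{v\ne u}w_{vb}\big)^{\alpha-1}$. $f^{\mathrm{SU}}=\max_{\mathbf z\in\mathcal Z}G_\alpha(\mathbf z)$ is the single-station association problem in which each station shares its resource uniformly among its associated users and the objective is the sum of $\alpha$-fair utilities ($U_\alpha(R)=R^{1-\alpha}/(1-\alpha)$, $U_1=\log$)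 of user rates; $f^{\mathrm{RSU}}=\max_{\mathbf x\in\mathcal X}G_\alpha(\mathbf x)$ is its relaxation; $\mathbf z^*,\mathbf x^*$ denote their optimizers. *)

theory Defs
  imports "HOL-Analysis.Analysis"
begin

text \<open>Association matrices are functions on users and stations, required to vanish
outside U x B (so that the integral feasible set is a finite set).\<close>

definition Zset :: "'u set \<Rightarrow> 'b set \<Rightarrow> ('u \<Rightarrow> 'b \<Rightarrow> real) set" where
  "Zset U B = {z. (\<forall>u b. (u \<notin> U \<or> b \<notin> B) \<longrightarrow> z u b = 0)
              \<and> (\<forall>u\<in>U. \<forall>b\<in>B. z u b \<in> \<int> \<and> z u b \<ge> 0)
              \<and> (\<forall>u\<in>U. (\<Sum>b\<in>B. z u b) = 1)}"

definition Xset :: "'u set \<Rightarrow> 'b set \<Rightarrow> ('u \<Rightarrow> 'b \<Rightarrow> real) set" where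
  "Xset U B = {x. (\<forall>u b. (u \<notin> U \<or> b \<notin> B) \<longrightarrow> x u b = 0)
              \<and> (\<forall>u\<in>U. \<forall>b\<in>B. x u b \<ge> 0)
              \<and> (\<forall>u\<in>U. (\<Sum>b\<in>B. x u b) = 1)}"

definition load :: "'u set \<Rightarrow> ('u \<Rightarrow> 'b \<Rightarrow> real) \<Rightarrow> 'u \<Rightarrow> 'b \<Rightarrow> real" where
  "load U w u b = 1 + (\<Sum>v\<in>U - {u}. w v b)"

definition G :: "real \<Rightarrow> ('u \<Rightarrow> 'b \<Rightarrow> real) \<Rightarrow> 'u set \<Rightarrow> 'b set
                 \<Rightarrow> ('u \<Rightarrow> 'b \<Rightarrow> real) \<Rightarrow> real" where
  "G \<alpha> r U B w =
     (if \<alpha> = 0 then (\<Sum>u\<in>U. \<Sum>b\<in>B. r u b * w u b / load U w u b)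
      else if \<alpha> = 1 then (\<Sum>u\<in>U. \<Sum>b\<in>B. w u b * (ln (r u b) - ln (load U w u b)))
      else (1 / (1 - \<alpha>)) * (\<Sum>u\<in>U. \<Sum>b\<in>B.
              r u b powr (1 - \<alpha>) * w u b * load U w u b powr (\<alpha> - 1)))"

end

theory Submission
  imports Defs
begin

definition h :: "real \<Rightarrow> real \<Rightarrow> real \<Rightarrow> real" where
  "h \<alpha> r L = (if \<alpha> = 0 then r / L else if \<alpha> = 1 then ln r - ln L
      else (1 / (1 - \<alpha>)) * r powr (1 - \<alpha>) * L powr (\<alpha> - 1))"

lemma h_convex:
  assumes "0 \<le> \<alpha>" "\<alpha> \<le> 2" "r > 0"
  shows "convex_on {0<..} (h \<alpha> r)"
proof -
  consider "\<alpha> = 0" | "\<alpha> = 1" | "\<alpha> \<noteq> 0" "\<alpha> \<noteq> 1" by blast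
  then show ?thesis
  proof cases
    case 1
    show ?thesis unfolding h_def using 1
      apply (simp only: if_True)
      apply (rule f''_ge0_imp_convex[where f' = "\<lambda>L. - r / L^2" and f'' = "\<lambda>L. 2 * r / L^3"])
      using assms
         apply (auto intro!: derivative_eq_intros simp: field_simps power2_eq_square power3_eq_cube)
      done
  next
    case 2
    show ?thesis unfolding h_def using 2
      apply simp
      apply (rule f''_ge0_imp_convex[where f' = "\<lambda>L. - 1 / L" and f'' = "\<lambda>L. 1 / L^2"])
      using assms
         apply (auto intro!: derivative_eq_intros simp: field_simps power2_eq_square)
      done
  next
    case 3
    define c where "c = (1 / (1 - \<alpha>)) * r powr (1 - \<alpha>)"
    have eq: "h \<alpha> r = (\<lambda>L. c * L powr (\<alpha> - 1))"
      using 3 by (auto simp: h_def fun_eq_iff c_def)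
    have d1: "((\<lambda>L. c * L powr (\<alpha> - 1)) has_real_derivative c * ((\<alpha> - 1) * L powr (\<alpha> - 2))) (at L)"
      if "L \<in> {0<..}" for L
      using DERIV_cmult[OF has_real_derivative_powr[of L "\<alpha> - 1"], of c] that by simp
    have d2: "((\<lambda>L. c * ((\<alpha> - 1) * L powr (\<alpha> - 2))) has_real_derivative c * ((\<alpha> - 1) * ((\<alpha> - 2) * L powr (\<alpha> - 3)))) (at L)"
      if "L \<in> {0<..}" for L
      using DERIV_cmult[OF DERIV_cmult[OF has_real_derivative_powr[of L "\<alpha> - 2"], of "\<alpha> - 1"], of c] that
      by (simp add: mult.assoc)
    show ?thesis unfolding eq
    proof (rule f''_ge0_imp_convex[OF _ d1 d2])
      fix L :: real assume "L \<in> {0<..}"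
      have "c * ((\<alpha> - 1) * ((\<alpha> - 2) * L powr (\<alpha> - 3)))
          = r powr (1 - \<alpha>) * ((2 - \<alpha>) * L powr (\<alpha> - 3))" using 3 by (simp add: field_simps c_def)
      also have "\<dots> \<ge> 0" using assms by simp
      finally show "0 \<le> c * ((\<alpha> - 1) * ((\<alpha> - 2) * L powr (\<alpha> - 3)))" .
    qed simp
  qed
qed

definition upd :: "('u \<Rightarrow> 'b \<Rightarrow> real) \<Rightarrow> 'u \<Rightarrow> 'b \<Rightarrow> 'u \<Rightarrow> 'b \<Rightarrow> real" where
  "upd x u b = (\<lambda>v c. if v = u then (if c = b then 1 else 0) else x v c)"

definition FF :: "('u \<Rightarrow> 'b \<Rightarrow> real \<Rightarrow> real) \<Rightarrow> 'u set \<Rightarrow> 'b set \<Rightarrow> ('u \<Rightarrow> 'b \<Rightarrow> real) \<Rightarrow> real" where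
  "FF \<Psi> U B w = (\<Sum>v\<in>U. \<Sum>c\<in>B. w v c * \<Psi> v c (load U w v c))"

lemma upd_X:
  assumes "x \<in> Xset U B" "u \<in> U" "b \<in> B" "finite B"
  shows "upd x u b \<in> Xset U B"
proof -
  have "(\<Sum>c\<in>B. upd x u b v c) = 1" if "v \<in> U" for v
  proof (cases "v = u")
    case True then show ?thesis using assms by (simp add: upd_def sum.delta)
  next
    case False then show ?thesis using assms that unfolding Xset_def upd_def by simp
  qed
  then show ?thesis using assms unfolding Xset_def upd_def by auto
qed

lemma load_upd_same:
  "load U (upd x u b) u c = load U x u c"
  unfolding load_def upd_def by (intro arg_cong[where f="\<lambda>s. 1 + s"] sum.cong) auto

lemma load_split:
  assumes "finite U" "u \<in> U" "u \<noteq> v"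
  shows "load U w v c = (1 + (\<Sum>v'\<in>U - {v} - {u}. w v' c)) + w u c"
proof -
  have "(\<Sum>v'\<in>U - {v}. w v' c) = w u c + (\<Sum>v'\<in>U - {v} - {u}. w v' c)"
    using assms by (intro sum.remove) auto
  then show ?thesis unfolding load_def by simp
qed

lemma sum_if_weights:
  fixes y :: "'b \<Rightarrow> real"
  assumes "finite B" "c \<in> B"
  shows "(\<Sum>b\<in>B. y b * (if c = b then P else Q)) = y c * P + ((\<Sum>b\<in>B. y b) - y c) * Q"
proof -
  have "(\<Sum>b\<in>B. y b * (if c = b then P else Q)) = (\<Sum>b\<in>B. y b * Q + (if c = b then y b * (P - Q) else 0))"
    by (intro sum.cong) (auto simp: right_diff_distrib)
  also have "\<dots> = (\<Sum>b\<in>B. y b) * Q + y c * (P - Q)"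
    using assms by (simp add: sum.distrib sum_distrib_right sum.delta)
  finally show ?thesis by (simp add: algebra_simps right_diff_distrib)
qed

lemma step_ineq:
  assumes fin: "finite U" "finite B"
    and conv: "\<And>v c A t. v \<in> U \<Longrightarrow> c \<in> B \<Longrightarrow> A \<ge> 1 \<Longrightarrow> 0 \<le> t \<Longrightarrow> t \<le> 1 \<Longrightarrow>
                 \<Psi> v c (A + t) \<le> (1 - t) * \<Psi> v c A + t * \<Psi> v c (A + 1)"
    and x: "x \<in> Xset U B" and u: "u \<in> U"
  shows "FF \<Psi> U B x \<le> (\<Sum>b\<in>B. x u b * FF \<Psi> U B (upd x u b))"
proof -
  have xnn: "\<And>v c. v \<in> U \<Longrightarrow> c \<in> B \<Longrightarrow> x v c \<ge> 0" and xs: "\<And>v. v \<in> U \<Longrightarrow> (\<Sum>c\<in>B. x v c) = 1"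
    using x unfolding Xset_def by auto
  have xle1: "x v c \<le> 1" if "v \<in> U" "c \<in> B" for v c
  proof -
    have "x v c \<le> (\<Sum>c\<in>B. x v c)" using that fin xnn by (intro member_le_sum) auto
    then show ?thesis using xs that by simp
  qed
  have termw: "x v c * \<Psi> v c (load U x v c) \<le>
      (\<Sum>b\<in>B. x u b * (upd x u b v c * \<Psi> v c (load U (upd x u b) v c)))"
    if v: "v \<in> U" and c: "c \<in> B" for v c
  proof (cases "v = u")
    case True
    have "(\<Sum>b\<in>B. x u b * (upd x u b v c * \<Psi> v c (load U (upd x u b) v c)))
        = (\<Sum>b\<in>B. (if c = b then x u b * \<Psi> v c (load U x v c) else 0))"
      apply (intro sum.cong refl)
      apply (simp add: True load_upd_same)
      apply (simp add: upd_def)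
      done
    also have "\<dots> = x v c * \<Psi> v c (load U x v c)" using True c fin by (simp add: sum.delta)
    finally show ?thesis by simp
  next
    case False
    define A where "A = 1 + (\<Sum>v'\<in>U - {v} - {u}. x v' c)"
    have A1: "A \<ge> 1" unfolding A_def using xnn c by (intro add_increasing2 sum_nonneg) auto
    have l1: "load U x v c = A + x u c" unfolding A_def using load_split[OF fin(1) u not_sym[OF False], of x c] by simp
    have l2: "load U (upd x u b) v c = A + (if c = b then 1 else 0)" for b
    proof -
      have "(\<Sum>v'\<in>U - {v} - {u}. upd x u b v' c) = (\<Sum>v'\<in>U - {v} - {u}. x v' c)"
        by (intro sum.cong) (auto simp: upd_def)
      then show ?thesis using load_split[OF fin(1) u not_sym[OF False], of "upd x u b" c]
        unfolding A_def by (simp add: upd_def)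
    qed
    have "(\<Sum>b\<in>B. x u b * (upd x u b v c * \<Psi> v c (load U (upd x u b) v c)))
        = x v c * (\<Sum>b\<in>B. x u b * (if c = b then \<Psi> v c (A + 1) else \<Psi> v c A))"
      unfolding sum_distrib_left
      apply (intro sum.cong refl)
      apply (simp only: l2)
      apply (simp add: upd_def False)
      done
    also have "\<dots> = x v c * (x u c * \<Psi> v c (A + 1) + (1 - x u c) * \<Psi> v c A)"
      using sum_if_weights[OF fin(2) c, of "x u"] xs[OF u] by simp
    finally have eq: "(\<Sum>b\<in>B. x u b * (upd x u b v c * \<Psi> v c (load U (upd x u b) v c)))
        = x v c * (x u c * \<Psi> v c (A + 1) + (1 - x u c) * \<Psi> v c A)" .
    have "\<Psi> v c (A + x u c) \<le> (1 - x u c) * \<Psi> v c A + x u c * \<Psi> v c (A + 1)"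
      using conv[OF v c A1, of "x u c"] xnn[OF u c] xle1[OF u c] by simp
    then have "x v c * \<Psi> v c (A + x u c) \<le> x v c * (x u c * \<Psi> v c (A + 1) + (1 - x u c) * \<Psi> v c A)"
      using xnn[OF v c] by (intro mult_left_mono) auto
    then show ?thesis using eq l1 by simp
  qed
  have "FF \<Psi> U B x \<le> (\<Sum>v\<in>U. \<Sum>c\<in>B. \<Sum>b\<in>B. x u b * (upd x u b v c * \<Psi> v c (load U (upd x u b) v c)))"
    unfolding FF_def using termw by (intro sum_mono) auto
  also have "\<dots> = (\<Sum>b\<in>B. \<Sum>v\<in>U. \<Sum>c\<in>B. x u b * (upd x u b v c * \<Psi> v c (load U (upd x u b) v c)))"
    by (subst sum.swap[of _ B B], rule sum.swap)
  also have "\<dots> = (\<Sum>b\<in>B. x u b * FF \<Psi> U B (upd x u b))"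
    unfolding FF_def by (simp add: sum_distrib_left)
  finally show ?thesis .
qed


lemma exists_integral:
  assumes fin: "finite U" "finite B" "B \<noteq> {}"
    and conv: "\<And>v c A t. v \<in> U \<Longrightarrow> c \<in> B \<Longrightarrow> A \<ge> 1 \<Longrightarrow> 0 \<le> t \<Longrightarrow> t \<le> 1 \<Longrightarrow>
                 \<Psi> v c (A + t) \<le> (1 - t) * \<Psi> v c A + t * \<Psi> v c (A + 1)"
    and S: "finite S"
  shows "x \<in> Xset U B \<Longrightarrow> (\<forall>v\<in>U - S. \<forall>c\<in>B. x v c \<in> \<int>) \<Longrightarrow> \<exists>z\<in>Zset U B. FF \<Psi> U B x \<le> FF \<Psi> U B z"
  using S
proof (induction S arbitrary: x rule: finite_induct)
  case empty
  then have "x \<in> Zset U B" unfolding Xset_def Zset_def by auto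
  then show ?case by blast
next
  case (insert u S)
  show ?case
  proof (cases "u \<in> U")
    case False
    then have "U - S = U - insert u S" by auto
    then show ?thesis using insert by auto
  next
    case True
    define g where "g b = FF \<Psi> U B (upd x u b)" for b
    have "Max (g ` B) \<in> g ` B" using fin by (intro Max_in) auto
    then obtain b where b: "b \<in> B" "g b = Max (g ` B)" by auto
    have gb: "g b' \<le> g b" if "b' \<in> B" for b' using b fin that by simp
    have xnn: "\<And>c. c \<in> B \<Longrightarrow> x u c \<ge> 0" and xs: "(\<Sum>c\<in>B. x u c) = 1"
      using insert.prems(1) True unfolding Xset_def by auto
    have "FF \<Psi> U B x \<le> (\<Sum>b'\<in>B. x u b' * g b')"
      unfolding g_def using step_ineq[where \<Psi>=\<Psi>, OF fin(1,2) conv insert.prems(1) True] by blast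
    also have "\<dots> \<le> (\<Sum>b'\<in>B. x u b' * g b)"
      using gb xnn by (intro sum_mono mult_left_mono) auto
    also have "\<dots> = g b" using xs by (simp add: sum_distrib_right[symmetric])
    finally have le: "FF \<Psi> U B x \<le> g b" .
    have X': "upd x u b \<in> Xset U B" using upd_X[OF insert.prems(1) True b(1) fin(2)] .
    have I': "\<forall>v\<in>U - S. \<forall>c\<in>B. upd x u b v c \<in> \<int>"
      using insert.prems(2) by (auto simp: upd_def)
    obtain z where "z \<in> Zset U B" "g b \<le> FF \<Psi> U B z"
      using insert.IH[OF X' I'] unfolding g_def by blast
    then show ?thesis using le by (blast intro: order_trans)
  qed
qed

lemma G_FF:
  "G \<alpha> r U B w = FF (\<lambda>v c. h \<alpha> (r v c)) U B w"
  unfolding G_def FF_def h_def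
  by (auto simp: sum_distrib_left mult_ac intro!: sum.cong)

lemma Z_finite:
  assumes "finite U" "finite B"
  shows "finite (Zset U B)"
proof -
  let ?F = "\<lambda>f u b. if u \<in> U \<and> b \<in> B then f (u, b) else (0::real)"
  have "Zset U B \<subseteq> ?F ` (PiE (U \<times> B) (\<lambda>_. {0, 1::real}))"
  proof
    fix z assume z: "z \<in> Zset U B"
    have z01: "z u b \<in> {0, 1}" if "u \<in> U" "b \<in> B" for u b
    proof -
      have "z u b \<in> \<int>" "z u b \<ge> 0" using z that unfolding Zset_def by auto
      then obtain n where n: "z u b = of_int n" "z u b \<ge> 0" by (auto elim: Ints_cases)
      moreover have "z u b \<le> (\<Sum>c\<in>B. z u c)"
        using z that assms unfolding Zset_def by (intro member_le_sum) auto
      then have "z u b \<le> 1" using z that unfolding Zset_def by auto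
      ultimately show ?thesis
      proof -
        have "n \<ge> 0" "n \<le> 1" using n \<open>z u b \<le> 1\<close> by simp_all
        then have "n = 0 \<or> n = 1" by arith
        then show ?thesis using n by auto
      qed
    qed
    have "z = ?F (restrict (\<lambda>p. z (fst p) (snd p)) (U \<times> B))"
    proof (intro ext)
      fix a b show "z a b = ?F (restrict (\<lambda>p. z (fst p) (snd p)) (U \<times> B)) a b"
        using z unfolding Zset_def by (cases "a \<in> U \<and> b \<in> B") auto
    qed
    moreover have "restrict (\<lambda>p. z (fst p) (snd p)) (U \<times> B) \<in> PiE (U \<times> B) (\<lambda>_. {0, 1::real})"
    proof -
      have "\<forall>p\<in>U \<times> B. z (fst p) (snd p) \<in> {0, 1}" using z01 by auto
      then show ?thesis by (auto simp: PiE_iff)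
    qed
    ultimately show "z \<in> ?F ` (PiE (U \<times> B) (\<lambda>_. {0, 1::real}))" by blast
  qed
  moreover have "finite (PiE (U \<times> B) (\<lambda>_. {0, 1::real}))"
    using assms by (intro finite_PiE) auto
  ultimately show ?thesis by (meson finite_surj)
qed

theorem theorem2:
  fixes U :: "'u set" and B :: "'b set" and r :: "'u \<Rightarrow> 'b \<Rightarrow> real" and \<alpha> :: real
  assumes "finite U" "U \<noteq> {}" "finite B" "B \<noteq> {}"
    and "\<forall>u\<in>U. \<forall>b\<in>B. r u b > 0"
    and "0 \<le> \<alpha>" "\<alpha> \<le> 2"
  shows "(MAX z\<in>Zset U B. G \<alpha> r U B z) = (SUP x\<in>Xset U B. G \<alpha> r U B x)"
proof -
  let ?\<Psi> = "\<lambda>v c. h \<alpha> (r v c)"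
  have conv: "?\<Psi> v c (A + t) \<le> (1 - t) * ?\<Psi> v c A + t * ?\<Psi> v c (A + 1)"
    if "v \<in> U" "c \<in> B" "A \<ge> 1" "0 \<le> t" "t \<le> 1" for v c A t
  proof -
    have cv: "convex_on {0<..} (h \<alpha> (r v c))" using h_convex assms that by auto
    have "(1 - t) *\<^sub>R A + t *\<^sub>R (A + 1) = A + t" by (simp add: algebra_simps)
    then show ?thesis using convex_onD[OF cv, of t A "A + 1"] that by simp
  qed
  obtain b0 where b0: "b0 \<in> B" using assms by blast
  let ?z0 = "\<lambda>u b. if u \<in> U \<and> b = b0 then 1 else (0::real)"
  have "?z0 \<in> Zset U B" unfolding Zset_def using b0 assms(3)
    by (auto simp: sum.delta' cong: conj_cong)
  then have Zne: "Zset U B \<noteq> {}" by blast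
  have ZX: "Zset U B \<subseteq> Xset U B" unfolding Zset_def Xset_def by auto
  have Zfin: "finite (Zset U B)" using Z_finite assms by blast
  define M where "M = (MAX z\<in>Zset U B. G \<alpha> r U B z)"
  have MZ: "M \<in> (\<lambda>z. G \<alpha> r U B z) ` Zset U B" unfolding M_def using Zfin Zne by (intro Max_in) auto
  have Mge: "G \<alpha> r U B z \<le> M" if "z \<in> Zset U B" for z unfolding M_def using Zfin that by simp
  have "Sup ((\<lambda>x. G \<alpha> r U B x) ` Xset U B) = M"
  proof (rule cSup_eq_maximum)
    show "M \<in> (\<lambda>x. G \<alpha> r U B x) ` Xset U B" using MZ ZX by blast
  next
    fix y assume "y \<in> (\<lambda>x. G \<alpha> r U B x) ` Xset U B"
    then obtain x where x: "x \<in> Xset U B" "y = G \<alpha> r U B x" by blast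
    have "\<exists>z\<in>Zset U B. FF ?\<Psi> U B x \<le> FF ?\<Psi> U B z"
      using exists_integral[where \<Psi> = "\<lambda>v c. h \<alpha> (r v c)" and S=U and x=x, OF assms(1,3,4) conv] assms(1) x(1) by auto
    then obtain z where "z \<in> Zset U B" "G \<alpha> r U B x \<le> G \<alpha> r U B z" by (auto simp: G_FF)
    then show "y \<le> M" using Mge x(2) by force
  qed
  then show ?thesis unfolding M_def by simp
qed

end
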